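(* Let $G$ be a locally compact group with Haar measure $\nu$. For every open symmetric relatively compact neighborhood $V$ of the identity and every compact set $B\subseteq G$ there exist a regular compact set $C'$ and finitely many elements $g_1,\dots,g_n\in G$ such that: the interior of $C'$ is $V$-connected; $\nu(\partial C')=0$; $B\subseteq\bigcup_{i=1}^n g_iC'$; and $g_iC'V\cap g_jC'V=\emptyset$ for $i\neq j$.
   Context: A compact set is regular if it equals the closure of its interior. A set $S\subseteq G$ is $V$-disconnected if there is $A\subseteq S$ with $A\neq\emptyset$, $A\neq S$ and $AV\cap S=A$; otherwise $S$ is $V$-connected. $\partial C'$ is the topological boundary. *)

theory Defs
  imports "HOL-Analysis.Analysis" "HOL-Probability.Probability"
begin

text \<open>Groups are written additively (class group_add, not necessarily commutative):
  g C' is rendered as the left translate ((+) g) ` C', and A V as the pointwise sum set.\<close>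

definition setmul :: "'a::plus set \<Rightarrow> 'a set \<Rightarrow> 'a set" where
  "setmul A B = {a + b | a b. a \<in> A \<and> b \<in> B}"

definition topological_group :: "'a::{topological_space, group_add} itself \<Rightarrow> bool" where
  "topological_group _ \<longleftrightarrow>
     continuous_on (UNIV :: ('a \<times> 'a) set) (\<lambda>p. fst p + snd p) \<and>
     continuous_on (UNIV :: 'a set) uminus"

definition locally_compact_group :: "'a::{t2_space, group_add} itself \<Rightarrow> bool" where
  "locally_compact_group T \<longleftrightarrow> topological_group T \<and>
     locally_compact_space (euclidean :: 'a topology)"

definition haar_measure :: "'a::{t2_space, group_add} measure \<Rightarrow> bool" where
  "haar_measure \<nu> \<longleftrightarrow>
     sets \<nu> = sets borel \<and>
     (\<forall>g A. A \<in> sets borel \<longrightarrow> emeasure \<nu> ((+) g ` A) = emeasure \<nu> A) \<and>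
     (\<forall>K. compact K \<longrightarrow> emeasure \<nu> K < \<infinity>) \<and>
     (\<forall>U. open U \<and> U \<noteq> {} \<longrightarrow> emeasure \<nu> U > 0) \<and>
     (\<forall>A \<in> sets borel. emeasure \<nu> A = (INF U \<in> {U. open U \<and> A \<subseteq> U}. emeasure \<nu> U)) \<and>
     (\<forall>U. open U \<longrightarrow> emeasure \<nu> U = (SUP K \<in> {K. compact K \<and> K \<subseteq> U}. emeasure \<nu> K))"

definition regular_compact :: "'a::topological_space set \<Rightarrow> bool" where
  "regular_compact C \<longleftrightarrow> compact C \<and> C = closure (interior C)"

definition V_connected :: "'a::plus set \<Rightarrow> 'a set \<Rightarrow> bool" where
  "V_connected V S \<longleftrightarrow>
     \<not> (\<exists>A. A \<subseteq> S \<and> A \<noteq> {} \<and> A \<noteq> S \<and> setmul A V \<inter> S = A)"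

end

theory Submission
  imports Defs
begin


lemma hausdorff_t2: "Hausdorff_space (euclidean :: 'a::t2_space topology)"
  unfolding Hausdorff_space_def using hausdorff by (auto simp: disjnt_def)

lemma level_null:
  fixes \<nu> :: "'a::t2_space measure" and g :: "'a \<Rightarrow> real"
  assumes sets: "sets \<nu> = sets borel" and M: "compact M" and fin: "emeasure \<nu> M < \<infinity>"
    and g: "continuous_on M g"
  shows "\<exists>t\<in>{0<..<1::real}. emeasure \<nu> {x\<in>M. g x = t} = 0"
proof -
  have sp: "space \<nu> = UNIV" using sets_eq_imp_space_eq[OF sets] by simp
  have Mb: "M \<in> sets \<nu>" using sets M by (simp add: compact_imp_closed)
  define N where "N = restrict_space \<nu> M"
  have spN: "space N = M" by (simp add: N_def space_restrict_space sp)
  have finN: "finite_measure N"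
    unfolding N_def
    by (rule finite_measureI) (use fin Mb sp in \<open>auto simp: space_restrict_space emeasure_restrict_space\<close>)
  have gm: "g \<in> borel_measurable N"
  proof -
    have "g \<in> borel_measurable (restrict_space borel M)"
      by (rule borel_measurable_continuous_on_restrict[OF g])
    moreover have "sets N = sets (restrict_space borel M)"
      unfolding N_def by (rule sets_restrict_space_cong[OF sets])
    ultimately show ?thesis using measurable_cong_sets by blast
  qed
  define D where "D = distr N borel g"
  have "finite_measure D" unfolding D_def
    by (rule finite_measure.finite_measure_distr[OF finN gm])
  then have cD: "countable {t. measure D {t} \<noteq> 0}" by (rule finite_measure.countable_support)
  have "\<not> {0<..<1::real} \<subseteq> {t. measure D {t} \<noteq> 0}"
    using cD countable_subset uncountable_open_interval[of 0 1] by auto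
  then obtain t where t: "t \<in> {0<..<1::real}" "measure D {t} = 0" by blast
  have eq: "g -` {t} \<inter> space N = {x\<in>M. g x = t}" using spN by auto
  have "measure D {t} = measure N {x\<in>M. g x = t}"
    unfolding D_def using measure_distr[OF gm, of "{t}"] eq by simp
  also have "\<dots> = measure \<nu> {x\<in>M. g x = t}"
    unfolding N_def by (rule measure_restrict_space) (use Mb sp in auto)
  finally have "measure \<nu> {x\<in>M. g x = t} = 0" using t by simp
  moreover have "emeasure \<nu> {x\<in>M. g x = t} < \<infinity>"
    using fin emeasure_mono[of "{x\<in>M. g x = t}" M \<nu>] Mb by (auto intro: le_less_trans)
  ultimately have "emeasure \<nu> {x\<in>M. g x = t} = 0"
    using emeasure_eq_ennreal_measure[of \<nu> "{x\<in>M. g x = t}"] by simp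
  then show ?thesis using t by blast
qed



inductive_set reach :: "'a::group_add set \<Rightarrow> 'a set" for V where
  reach0: "0 \<in> reach V"
| reachS: "x \<in> reach V \<Longrightarrow> v \<in> V \<Longrightarrow> x + v \<in> reach V"

definition linked :: "'a::plus set \<Rightarrow> 'a set \<Rightarrow> bool" where
  "linked V P \<longleftrightarrow> (\<forall>A. A \<inter> P \<noteq> {} \<longrightarrow> setmul A V \<inter> P \<subseteq> A \<longrightarrow> P \<subseteq> A)"

lemma linkedD: "linked V P \<Longrightarrow> A \<inter> P \<noteq> {} \<Longrightarrow> setmul A V \<inter> P \<subseteq> A \<Longrightarrow> P \<subseteq> A"
  unfolding linked_def by blast

lemma setmul_iff: "z \<in> setmul A V \<longleftrightarrow> (\<exists>a\<in>A. \<exists>v\<in>V. z = a + v)"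
  unfolding setmul_def by auto

lemma sym_V: "uminus ` V = V \<Longrightarrow> v \<in> V \<Longrightarrow> - v \<in> (V::'a::group_add set)"
  by (metis image_eqI)

lemma reach_V: "v \<in> V \<Longrightarrow> v \<in> reach V"
  using reachS[OF reach0] by fastforce

lemma reach_add: "y \<in> reach V \<Longrightarrow> x \<in> reach V \<Longrightarrow> x + y \<in> reach V"
proof (induction y rule: reach.induct)
  case reach0 then show ?case by simp
next
  case (reachS y v)
  have "(x + y) + v \<in> reach V" by (rule reach.reachS) (use reachS in auto)
  then show ?case by (simp add: add.assoc)
qed

lemma reach_neg: assumes "uminus ` V = V" shows "x \<in> reach V \<Longrightarrow> - x \<in> reach V"
proof (induction x rule: reach.induct)
  case reach0 then show ?case by (simp add: reach.reach0)
next
  case (reachS x v)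
  have "- v \<in> reach V" using reach_V sym_V[OF assms reachS(2)] by blast
  then have "- v + - x \<in> reach V" using reachS reach_add by blast
  then show ?case by (simp add: minus_add)
qed

lemma reach_chain:
  assumes sym: "uminus ` V = V"
  shows "x \<in> reach V \<Longrightarrow> \<exists>P. finite P \<and> 0 \<in> P \<and> x \<in> P \<and> P \<subseteq> reach V \<and> linked V P"
proof (induction x rule: reach.induct)
  case reach0
  show ?case by (rule exI[of _ "{0}"]) (auto simp: linked_def intro: reach.reach0)
next
  case (reachS x v)
  then obtain P where P: "finite P" "0 \<in> P" "x \<in> P" "P \<subseteq> reach V" "linked V P" by blast
  have "linked V (insert (x + v) P)"
    unfolding linked_def
  proof (intro allI impI)
    fix A assume A1: "A \<inter> insert (x + v) P \<noteq> {}" and A2: "setmul A V \<inter> insert (x + v) P \<subseteq> A"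
    have AP: "setmul A V \<inter> P \<subseteq> A" using A2 by auto
    have "A \<inter> P \<noteq> {}"
    proof (rule ccontr)
      assume "\<not> ?thesis"
      then have "x + v \<in> A" using A1 by auto
      moreover have "x = (x + v) + - v" by (simp add: add.assoc)
      ultimately have "x \<in> setmul A V" using sym_V[OF sym reachS(2)] unfolding setmul_iff by blast
      then have "x \<in> A" using A2 P(3) by auto
      then show False using \<open>\<not> (A \<inter> P \<noteq> {})\<close> P(3) by auto
    qed
    then have "P \<subseteq> A" using linkedD[OF P(5) _ AP] by blast
    then have "x \<in> A" using P(3) by auto
    then have "x + v \<in> setmul A V" using reachS(2) unfolding setmul_iff by blast
    then have "x + v \<in> A" using A2 by auto
    then show "insert (x + v) P \<subseteq> A" using \<open>P \<subseteq> A\<close> by auto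
  qed
  then show ?case using P reach.reachS[OF reachS(1,2)]
    by (intro exI[of _ "insert (x + v) P"]) auto
qed

lemma linked_Union:
  assumes "\<And>P. P \<in> Ps \<Longrightarrow> linked V P \<and> 0 \<in> P"
  shows "linked V (\<Union>Ps)"
  unfolding linked_def
proof (intro allI impI)
  fix A assume A1: "A \<inter> \<Union>Ps \<noteq> {}" and A2: "setmul A V \<inter> \<Union>Ps \<subseteq> A"
  then obtain P where P: "P \<in> Ps" "A \<inter> P \<noteq> {}" by blast
  have sub: "setmul A V \<inter> Q \<subseteq> A" if "Q \<in> Ps" for Q using A2 that by blast
  have "P \<subseteq> A"
    by (rule linkedD[OF _ P(2) sub[OF P(1)]]) (use assms[OF P(1)] in blast)
  then have "0 \<in> A" using assms[OF P(1)] by blast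
  have "Q \<subseteq> A" if "Q \<in> Ps" for Q
  proof (rule linkedD[OF _ _ sub[OF that]])
    show "linked V Q" using assms[OF that] by blast
    show "A \<inter> Q \<noteq> {}" using assms[OF that] \<open>0 \<in> A\<close> by blast
  qed
  then show "\<Union>Ps \<subseteq> A" by blast
qed

lemma linked_Vconn:
  assumes sym: "uminus ` V = (V::'a::group_add set)" and L: "linked V F" and FW: "F \<subseteq> W" and WF: "W \<subseteq> setmul F V"
  shows "V_connected V W"
  unfolding V_connected_def
proof
  assume "\<exists>A. A \<subseteq> W \<and> A \<noteq> {} \<and> A \<noteq> W \<and> setmul A V \<inter> W = A"
  then obtain A where A: "A \<subseteq> W" "A \<noteq> {}" "A \<noteq> W" "setmul A V \<inter> W = A" by blast
  obtain a where a: "a \<in> A" using A(2) by blast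
  then have "a \<in> setmul F V" using A(1) WF by blast
  then obtain f v where fv: "f \<in> F" "v \<in> V" "a = f + v" unfolding setmul_iff by blast
  have "f = a + - v" by (simp add: fv(3) add.assoc)
  then have "f \<in> setmul A V" using a sym_V[OF sym fv(2)] unfolding setmul_iff by blast
  then have "f \<in> A" using A(4) FW fv(1) by blast
  have "F \<subseteq> A"
  proof (rule linkedD[OF L])
    show "A \<inter> F \<noteq> {}" using \<open>f \<in> A\<close> fv(1) by blast
    show "setmul A V \<inter> F \<subseteq> A" using A(4) FW by blast
  qed
  have "W \<subseteq> A"
  proof
    fix w assume w: "w \<in> W"
    then have "w \<in> setmul F V" using WF by blast
    then obtain f' v' where "f' \<in> F" "v' \<in> V" "w = f' + v'" unfolding setmul_iff by blast
    then have "w \<in> setmul A V" using \<open>F \<subseteq> A\<close> unfolding setmul_iff by blast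
    then show "w \<in> A" using A(4) w by blast
  qed
  then show False using A(1,3) by blast
qed



lemma tg_trans_cont:
  assumes "topological_group TYPE('a::{t2_space,group_add})"
  shows "continuous_on UNIV ((+) (a::'a))"
proof -
  have c: "continuous_on UNIV (\<lambda>p::'a\<times>'a. fst p + snd p)" using assms unfolding topological_group_def by blast
  have "continuous_on UNIV ((\<lambda>p::'a\<times>'a. fst p + snd p) \<circ> (\<lambda>y. (a, y)))"
    by (rule continuous_on_compose) (auto intro: continuous_on_subset[OF c] continuous_intros)
  then show ?thesis by (simp add: o_def)
qed

lemma trans_image_eq: "(+) (a::'a::group_add) ` S = (+) (- a) -` S"
proof
  show "(+) a ` S \<subseteq> (+) (- a) -` S" by (auto simp: add.assoc[symmetric])
  show "(+) (- a) -` S \<subseteq> (+) a ` S"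
  proof
    fix x assume "x \<in> (+) (- a) -` S"
    then have "- a + x \<in> S" by simp
    moreover have "x = a + (- a + x)" by (simp add: add.assoc[symmetric])
    ultimately show "x \<in> (+) a ` S" by blast
  qed
qed

lemma tg_open_trans:
  assumes "topological_group TYPE('a::{t2_space,group_add})" "open S"
  shows "open ((+) (a::'a) ` S)"
  unfolding trans_image_eq by (rule open_vimage[OF assms(2) tg_trans_cont[OF assms(1)]])

lemma tg_compact_trans:
  assumes "topological_group TYPE('a::{t2_space,group_add})" "compact S"
  shows "compact ((+) (a::'a) ` S)"
  by (rule compact_continuous_image[OF continuous_on_subset[OF tg_trans_cont[OF assms(1)]] assms(2)]) simp

lemma tg_setmul_open:
  assumes "topological_group TYPE('a::{t2_space,group_add})" "open V"
  shows "open (setmul A (V::'a set))"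
proof -
  have "setmul A V = (\<Union>a\<in>A. (+) a ` V)" unfolding setmul_def by blast
  then show ?thesis using tg_open_trans[OF assms] by auto
qed

lemma tg_closure_reach:
  assumes "topological_group TYPE('a::{t2_space,group_add})" "open V" "0 \<in> V" "uminus ` V = (V::'a set)"
  shows "closure V \<subseteq> reach V"
proof
  fix w assume w: "w \<in> closure V"
  have "open ((+) w ` V)" by (rule tg_open_trans[OF assms(1,2)])
  moreover have "w \<in> (+) w ` V" using assms(3) by force
  ultimately have "(+) w ` V \<inter> V \<noteq> {}"
    using open_Int_closure_eq_empty[of "(+) w ` V" V] w by blast
  then obtain v where v: "v \<in> V" "w + v \<in> V" by blast
  have "w = (w + v) + - v" by (simp add: add.assoc)
  moreover have "(w + v) + - v \<in> reach V"
    by (rule reach_add[OF reach_V[OF sym_V[OF assms(4) v(1)]] reach_V[OF v(2)]])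
  ultimately show "w \<in> reach V" by simp
qed



lemma construct:
  fixes \<nu> :: "'a::{t2_space, group_add} measure" and V K0 :: "'a set"
  assumes tg: "topological_group TYPE('a)" and haar: "haar_measure \<nu>"
    and V: "open V" "0 \<in> V" "uminus ` V = V" "compact (closure V)"
    and K0: "compact K0" "K0 \<subseteq> reach V"
  shows "\<exists>C'. regular_compact C' \<and> V_connected V (interior C') \<and> emeasure \<nu> (frontier C') = 0
           \<and> K0 \<subseteq> C' \<and> C' \<subseteq> reach V"
proof -
  have "K0 \<subseteq> (\<Union>y\<in>K0. (+) y ` V)" using V(2) by force
  then obtain Y where Y: "Y \<subseteq> K0" "finite Y" "K0 \<subseteq> (\<Union>y\<in>Y. (+) y ` V)"
    using compactE_image[OF K0(1), of K0 "\<lambda>y. (+) y ` V"] tg_open_trans[OF tg V(1)] by metis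
  have "\<forall>y\<in>Y. \<exists>P. finite P \<and> 0 \<in> P \<and> y \<in> P \<and> P \<subseteq> reach V \<and> linked V P"
    using reach_chain[OF V(3)] Y(1) K0(2) by blast
  then obtain Pf where Pf: "\<And>y. y \<in> Y \<Longrightarrow> finite (Pf y) \<and> 0 \<in> Pf y \<and> y \<in> Pf y \<and> Pf y \<subseteq> reach V \<and> linked V (Pf y)"
    by metis
  define F where "F = \<Union>(insert {0} (Pf ` Y))"
  have linF: "linked V F" unfolding F_def
  proof (rule linked_Union)
    fix P assume "P \<in> insert {0} (Pf ` Y)"
    then show "linked V P \<and> 0 \<in> P"
    proof
      assume "P = {0}" then show ?thesis unfolding linked_def by blast
    next
      assume "P \<in> Pf ` Y" then show ?thesis using Pf by blast
    qed
  qed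
  have finF: "finite F" unfolding F_def using Pf Y(2) by auto
  have FR: "F \<subseteq> reach V" unfolding F_def using Pf reach.reach0 by blast
  have YF: "Y \<subseteq> F" unfolding F_def using Pf by blast
  define Op where "Op = setmul F V"
  have openOp: "open Op" unfolding Op_def by (rule tg_setmul_open[OF tg V(1)])
  have K0Op: "K0 \<subseteq> Op" unfolding Op_def setmul_def using Y(3) YF by blast
  have FOp: "F \<subseteq> Op" unfolding Op_def setmul_def using V(2) by force
  define M where "M = (\<Union>f\<in>F. (+) f ` closure V)"
  have compM: "compact M" unfolding M_def
    using finF tg_compact_trans[OF tg V(4)] by (intro compact_UN) auto
  have closedM: "closed M" using compM by (rule compact_imp_closed)
  have OpM: "Op \<subseteq> M" unfolding Op_def M_def setmul_def using closure_subset[of V] by blast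
  have MR: "M \<subseteq> reach V"
  proof
    fix x assume "x \<in> M"
    then obtain f w where "f \<in> F" "w \<in> closure V" "x = f + w" unfolding M_def by blast
    then show "x \<in> reach V" using reach_add FR tg_closure_reach[OF tg V(1,2,3)] by blast
  qed
  define Kc where "Kc = K0 \<union> F"
  have compKc: "compact Kc" unfolding Kc_def using K0(1) finF finite_imp_compact by blast
  have KcOp: "Kc \<subseteq> Op" unfolding Kc_def using K0Op FOp by blast
  define X where "X = subtopology euclidean M"
  have normX: "normal_space X" unfolding X_def
    by (rule compact_Hausdorff_or_regular_imp_normal_space)
       (use compM hausdorff_t2 in \<open>auto intro: compact_space_subtopology Hausdorff_space_subtopology\<close>)
  have c1: "closedin X Kc" unfolding X_def closedin_closed
    using compact_imp_closed[OF compKc] KcOp OpM by blast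
  have c2: "closedin X (M - Op)" unfolding X_def closedin_closed
    using openOp by (intro exI[of _ "- Op"]) (auto simp: open_closed)
  have dj: "disjnt Kc (M - Op)" using KcOp by (auto simp: disjnt_def)
  obtain g where g: "continuous_map X (top_of_set {0..1::real}) g" "g ` Kc \<subseteq> {0}" "g ` (M - Op) \<subseteq> {1}"
    using Urysohn_lemma[OF normX c1 c2 dj, of 0 1] by auto
  have contg: "continuous_on M g"
    using g(1) unfolding X_def continuous_map_in_subtopology by simp
  note H = haar[unfolded haar_measure_def]
  have sets: "sets \<nu> = sets borel" using H[THEN conjunct1] .
  have finM: "emeasure \<nu> M < \<infinity>" using H[THEN conjunct2, THEN conjunct2, THEN conjunct1] compM by blast
  obtain t where t: "t \<in> {0<..<1::real}" "emeasure \<nu> {x\<in>M. g x = t} = 0"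
    using level_null[OF sets compM finM contg] by blast
  define U where "U = {x\<in>Op. g x < t}"
  obtain A where A: "open A" "A \<inter> M = g -` {..<t} \<inter> M"
    using contg[unfolded continuous_on_open_invariant, rule_format, OF open_lessThan[of t]] by blast
  have "U = Op \<inter> A" unfolding U_def using A(2) OpM by auto
  then have openU: "open U" using openOp A(1) by auto
  define Le where "Le = M \<inter> g -` {..t}"
  have closedLe: "closed Le" unfolding Le_def by (rule continuous_closed_preimage[OF contg closedM]) simp
  have LeOp: "Le \<subseteq> Op"
  proof
    fix x assume x: "x \<in> Le"
    show "x \<in> Op"
    proof (rule ccontr)
      assume "x \<notin> Op" then have "x \<in> M - Op" using x unfolding Le_def by blast
      then have "g x = 1" using g(3) by blast
      then show False using x t(1) unfolding Le_def by auto
    qed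
  qed
  have ULe: "U \<subseteq> Le" unfolding U_def Le_def using OpM by auto
  define C' where "C' = closure U"
  have CLe: "C' \<subseteq> Le" unfolding C'_def by (rule closure_minimal[OF ULe closedLe])
  have CM: "C' \<subseteq> M" using CLe unfolding Le_def by blast
  have KcU: "Kc \<subseteq> U" unfolding U_def using KcOp g(2) t(1) by auto
  have UI: "U \<subseteq> interior C'" unfolding C'_def using openU closure_subset interior_maximal by blast
  have reg: "regular_compact C'" unfolding regular_compact_def
  proof
    have "C' = M \<inter> C'" using CM by blast
    then show "compact C'" using compM unfolding C'_def by (metis closed_closure compact_Int_closed)
    have "closure U \<subseteq> closure (interior C')" using UI closure_mono by blast
    moreover have "closure (interior C') \<subseteq> C'"
      unfolding C'_def by (metis closure_closure closure_mono interior_subset)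
    ultimately show "C' = closure (interior C')" unfolding C'_def by blast
  qed
  have conn: "V_connected V (interior C')"
  proof (rule linked_Vconn[OF V(3) linF])
    show "F \<subseteq> interior C'" using KcU UI unfolding Kc_def by blast
    show "interior C' \<subseteq> setmul F V" using interior_subset[of C'] CLe LeOp unfolding Op_def by blast
  qed
  have fr: "frontier C' \<subseteq> {x\<in>M. g x = t}"
  proof
    fix x assume x: "x \<in> frontier C'"
    then have xC: "x \<in> C'" "x \<notin> U" unfolding frontier_def C'_def using UI unfolding C'_def by auto
    then have "x \<in> Le" using CLe by blast
    then have "x \<in> M" "g x \<le> t" "x \<in> Op" using LeOp unfolding Le_def by auto
    moreover have "\<not> g x < t" using xC(2) \<open>x \<in> Op\<close> unfolding U_def by blast
    ultimately show "x \<in> {x\<in>M. g x = t}" by auto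
  qed
  have "{x\<in>M. g x = t} = M \<inter> g -` {t}" by blast
  then have "closed {x\<in>M. g x = t}" using continuous_closed_preimage[OF contg closedM, of "{t}"] by simp
  then have "{x\<in>M. g x = t} \<in> sets \<nu>" using sets by simp
  then have "emeasure \<nu> (frontier C') \<le> emeasure \<nu> {x\<in>M. g x = t}" using fr by (rule emeasure_mono[rotated])
  then have meas: "emeasure \<nu> (frontier C') = 0" using t(2) by simp
  have "K0 \<subseteq> C'" using KcU closure_subset[of U] unfolding Kc_def C'_def by blast
  then show ?thesis using reg conn meas CM MR by blast
qed



lemma cls_eq:
  assumes sym: "uminus ` V = (V::'a::group_add set)" and z: "z \<in> (+) a ` reach V"
  shows "(+) z ` reach V = (+) a ` reach V"
proof -
  obtain r where r: "r \<in> reach V" "z = a + r" using z by blast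
  show ?thesis
  proof
    show "(+) z ` reach V \<subseteq> (+) a ` reach V"
    proof
      fix y assume "y \<in> (+) z ` reach V"
      then obtain s where s: "s \<in> reach V" "y = z + s" by blast
      then have "y = a + (r + s)" using r by (simp add: add.assoc)
      moreover have "r + s \<in> reach V" using reach_add[OF s(1) r(1)] .
      ultimately show "y \<in> (+) a ` reach V" by blast
    qed
    show "(+) a ` reach V \<subseteq> (+) z ` reach V"
    proof
      fix y assume "y \<in> (+) a ` reach V"
      then obtain s where s: "s \<in> reach V" "y = a + s" by blast
      then have "y = z + (- r + s)" using r by (simp add: add.assoc[symmetric])
      moreover have "- r + s \<in> reach V" using reach_add[OF s(1) reach_neg[OF sym r(1)]] .
      ultimately show "y \<in> (+) z ` reach V" by blast
    qed
  qed
qed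

theorem lemma10:
  fixes \<nu> :: "'a::{t2_space, group_add} measure"
    and V B :: "'a set"
  assumes "locally_compact_group TYPE('a)"
    and "haar_measure \<nu>"
    and "open V" and "0 \<in> V" and "uminus ` V = V" and "compact (closure V)"
    and "compact B"
  shows "\<exists>C' (n::nat) (g :: nat \<Rightarrow> 'a).
           regular_compact C' \<and>
           V_connected V (interior C') \<and>
           emeasure \<nu> (frontier C') = 0 \<and>
           B \<subseteq> (\<Union>i\<in>{1..n}. (+) (g i) ` C') \<and>
           (\<forall>i\<in>{1..n}. \<forall>j\<in>{1..n}. i \<noteq> j \<longrightarrow>
              setmul ((+) (g i) ` C') V \<inter> setmul ((+) (g j) ` C') V = {})"
proof -
  have tg: "topological_group TYPE('a)" using assms(1) unfolding locally_compact_group_def by blast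
  define R where "R = reach V"
  define cls where "cls x = (+) x ` R" for x
  have "B \<subseteq> (\<Union>x\<in>B. (+) x ` V)" using assms(4) by force
  then obtain X where X: "X \<subseteq> B" "finite X" "B \<subseteq> (\<Union>x\<in>X. (+) x ` V)"
    using compactE_image[OF assms(7), of B "\<lambda>x. (+) x ` V"] tg_open_trans[OF tg assms(3)] by metis
  define rr where "rr x = (SOME y. y \<in> X \<and> cls y = cls x)" for x
  have rr: "rr x \<in> X \<and> cls (rr x) = cls x" if "x \<in> X" for x
    unfolding rr_def by (rule someI[of _ x]) (use that in blast)
  have clsR: "- (rr x) + x \<in> R" if "x \<in> X" for x
  proof -
    have "x \<in> cls x" unfolding cls_def R_def using reach.reach0 by force
    then have "x \<in> cls (rr x)" using rr[OF that] by simp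
    then obtain r where r: "r \<in> R" "x = rr x + r" unfolding cls_def by blast
    have "- (rr x) + x = - (rr x) + (rr x + r)" using r(2) by (rule arg_cong)
    also have "\<dots> = r" by (simp add: add.assoc[symmetric])
    finally show ?thesis using r(1) by simp
  qed
  have cVR: "closure V \<subseteq> R" unfolding R_def by (rule tg_closure_reach[OF tg assms(3,4,5)])
  define K0 where "K0 = (\<Union>x\<in>X. (+) (- (rr x) + x) ` closure V)"
  have compK0: "compact K0" unfolding K0_def
    using X(2) tg_compact_trans[OF tg assms(6)] by (intro compact_UN) auto
  have K0R: "K0 \<subseteq> reach V"
  proof
    fix y assume "y \<in> K0"
    then obtain x w where xw: "x \<in> X" "w \<in> closure V" "y = (- (rr x) + x) + w" unfolding K0_def by blast
    have "(- (rr x) + x) + w \<in> reach V"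
      using reach_add[of w V "- (rr x) + x"] cVR xw(2) clsR[OF xw(1)] unfolding R_def by blast
    then show "y \<in> reach V" using xw(3) by simp
  qed
  obtain C' where C': "regular_compact C'" "V_connected V (interior C')" "emeasure \<nu> (frontier C') = 0"
    "K0 \<subseteq> C'" "C' \<subseteq> reach V"
    using construct[OF tg assms(2,3,4,5,6) compK0 K0R] by blast
  define Gs where "Gs = rr ` X"
  have "finite Gs" unfolding Gs_def using X(2) by simp
  then obtain h where h: "bij_betw h {1..card Gs} Gs" using ex_bij_betw_nat_finite_1 by blast
  have cover: "B \<subseteq> (\<Union>i\<in>{1..card Gs}. (+) (h i) ` C')"
  proof
    fix b assume "b \<in> B"
    then obtain x v where xv: "x \<in> X" "v \<in> V" "b = x + v" using X(3) by blast
    have vc: "v \<in> closure V" using xv(2) closure_subset[of V] by (rule subsetD[rotated])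
    have "(- (rr x) + x) + v \<in> K0" unfolding K0_def
      by (rule UN_I[OF xv(1)]) (rule imageI[OF vc])
    then have inC: "(- (rr x) + x) + v \<in> C'" using C'(4) by blast
    have "b = rr x + ((- (rr x) + x) + v)" unfolding xv(3) by (simp add: add.assoc[symmetric])
    moreover have "rr x \<in> Gs" unfolding Gs_def using xv(1) by (rule imageI)
    then have "rr x \<in> h ` {1..card Gs}" using h unfolding bij_betw_def by simp
    then obtain i where i: "i \<in> {1..card Gs}" "rr x = h i" by blast
    ultimately have "b = h i + ((- (rr x) + x) + v)" by simp
    then have "b \<in> (+) (h i) ` C'" using inC by (rule image_eqI)
    then show "b \<in> (\<Union>i\<in>{1..card Gs}. (+) (h i) ` C')" using i(1) by blast
  qed
  have inR: "z \<in> cls a" if zin: "z \<in> setmul ((+) a ` C') V" for z a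
  proof -
    obtain c v where cv: "c \<in> C'" "v \<in> V" "z = a + c + v" using zin unfolding setmul_iff by blast
    have "c + v \<in> R" unfolding R_def using reach_add[OF reach_V[OF cv(2)]] cv(1) C'(5) by blast
    moreover have "z = a + (c + v)" using cv(3) by (simp add: add.assoc)
    ultimately show ?thesis unfolding cls_def by (rule image_eqI[rotated])
  qed
  have disj: "setmul ((+) (h i) ` C') V \<inter> setmul ((+) (h j) ` C') V = {}"
    if ij: "i \<in> {1..card Gs}" "j \<in> {1..card Gs}" "i \<noteq> j" for i j
  proof (rule ccontr)
    assume "\<not> ?thesis"
    then obtain z where "z \<in> setmul ((+) (h i) ` C') V" "z \<in> setmul ((+) (h j) ` C') V" by blast
    then have z: "z \<in> cls (h i)" "z \<in> cls (h j)" using inR by auto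
    have e1: "cls z = cls (h i)" unfolding cls_def R_def
      by (rule cls_eq[OF assms(5)]) (use z(1) in \<open>simp add: cls_def R_def\<close>)
    have e2: "cls z = cls (h j)" unfolding cls_def R_def
      by (rule cls_eq[OF assms(5)]) (use z(2) in \<open>simp add: cls_def R_def\<close>)
    have hi: "h i \<in> Gs" using h ij(1) unfolding bij_betw_def by blast
    have hj: "h j \<in> Gs" using h ij(2) unfolding bij_betw_def by blast
    obtain x where x: "x \<in> X" "h i = rr x" using hi unfolding Gs_def by blast
    obtain x' where x': "x' \<in> X" "h j = rr x'" using hj unfolding Gs_def by blast
    have "cls x = cls (rr x)" using rr[OF x(1)] by simp
    also have "\<dots> = cls (h i)" using x(2) by simp
    also have "\<dots> = cls (h j)" using e1 e2 by simp
    also have "\<dots> = cls (rr x')" using x'(2) by simp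
    also have "\<dots> = cls x'" using rr[OF x'(1)] by simp
    finally have cx: "cls x = cls x'" .
    have "rr x = rr x'" unfolding rr_def cx ..
    then have "h i = h j" using x(2) x'(2) by simp
    then show False using h ij unfolding bij_betw_def inj_on_def by blast
  qed
  show ?thesis
  proof (intro exI conjI)
    show "regular_compact C'" by (rule C'(1))
    show "V_connected V (interior C')" by (rule C'(2))
    show "emeasure \<nu> (frontier C') = 0" by (rule C'(3))
    show "B \<subseteq> (\<Union>i\<in>{1..card Gs}. (+) (h i) ` C')" by (rule cover)
    show "\<forall>i\<in>{1..card Gs}. \<forall>j\<in>{1..card Gs}. i \<noteq> j \<longrightarrow>
              setmul ((+) (h i) ` C') V \<inter> setmul ((+) (h j) ` C') V = {}"
      using disj by blast
  qed
qed


end
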